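(* Let $\mathcal{O}$ be a homogeneous and finitely generated operad. In the prefix poset of $\mathcal{O}$, for all $x,y\in\mathcal{O}$, $x\preceq y$ if and only if $x$ is a prefix of $y$, i.e. there exist $z_1,\dots,z_{|x|}\in\mathcal{O}$ with $y=x\circ[z_1,\dots,z_{|x|}]$. Moreover, $y$ covers $x$ if and only if there exist $\mathtt{a}\in\mathfrak{G}_\mathcal{O}$ and $i\in[|x|]$ such that $y=x\circ_i\mathtt{a}$.
   Context: Operads are nonsymmetric set-operads: graded sets $\mathcal{O}=\bigsqcup_n\mathcal{O}(n)$ (arity $|x|=n$ for $x\in\mathcal{O}(n)$) with partial compositions $\circ_i:\mathcal{O}(n)\times\mathcal{O}(m)\to\mathcal{O}(n+m-1)$, $i\in[n]$, and unit $\mathbf{1}\in\mathcal{O}(1)$, satisfying the usual associativity, commutativity and unit axioms. The full composition is $x\circ[z_1,\dots,z_n]=(\cdots((x\circ_n z_n)\circ_{n-1}z_{n-1})\cdots)\circ_1 z_1$ for $x\in\mathcal{O}(n)$. If $\mathcal{O}(0)=\emptyset$ and $\mathcal{O}(1)=\{\mathbf{1}\}$, $\mathcal{O}$ has a unique minimal generating set $\mathfrak{G}_\mathcal{O}$. A treelike expression of $x$ is a planar rooted tree with internal nodes decorated by elements of $\mathfrak{G}_\mathcal{O}$ (arity matching) evaluating to $x$ in $\mathcal{O}$. $\mathcal{O}$ is homogeneous if $\mathcal{O}(0)=\emptyset$, $\mathcal{O}(1)=\{\mathbf{1}\}$, and all treelike expressions of any given element have the same number of internal nodes (its degree); it is finitely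 generated if $\mathfrak{G}_\mathcal{O}$ is finite. The prefix poset of $\mathcal{O}$ is $\mathcal{O}$ ordered by $x\preceq y$ iff $y=(\cdots((x\circ_{i_1}\mathtt{a}_1)\circ_{i_2}\mathtt{a}_2)\cdots)\circ_{i_k}\mathtt{a}_k$ for some $k\ge0$, $\mathtt{a}_j\in\mathfrak{G}_\mathcal{O}$ and positive integers $i_j$. *)

theory Defs
  imports Main
begin

record 'a operad =
  carrier :: "'a set"
  arity :: "'a \<Rightarrow> nat"
  pcomp :: "'a \<Rightarrow> nat \<Rightarrow> 'a \<Rightarrow> 'a"
  op_unit :: 'a

definition ns_operad :: "('a, 'b) operad_scheme \<Rightarrow> bool" where
  "ns_operad Op \<longleftrightarrow>
     (\<forall>x\<in>carrier Op. \<forall>y\<in>carrier Op. \<forall>i. 1 \<le> i \<and> i \<le> arity Op x \<longrightarrow>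
        pcomp Op x i y \<in> carrier Op \<and> arity Op (pcomp Op x i y) = arity Op x + arity Op y - 1)
   \<and> op_unit Op \<in> carrier Op \<and> arity Op (op_unit Op) = 1
   \<and> (\<forall>x\<in>carrier Op. pcomp Op (op_unit Op) 1 x = x)
   \<and> (\<forall>x\<in>carrier Op. \<forall>i. 1 \<le> i \<and> i \<le> arity Op x \<longrightarrow> pcomp Op x i (op_unit Op) = x)
   \<and> (\<forall>x\<in>carrier Op. \<forall>y\<in>carrier Op. \<forall>z\<in>carrier Op. \<forall>i j.
        1 \<le> i \<and> i \<le> arity Op x \<and> 1 \<le> j \<and> j \<le> arity Op y \<longrightarrow>
        pcomp Op (pcomp Op x i y) (i + j - 1) z = pcomp Op x i (pcomp Op y j z))
   \<and> (\<forall>x\<in>carrier Op. \<forall>y\<in>carrier Op. \<forall>z\<in>carrier Op. \<forall>i j.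
        1 \<le> i \<and> i < j \<and> j \<le> arity Op x \<longrightarrow>
        pcomp Op (pcomp Op x i y) (j + arity Op y - 1) z = pcomp Op (pcomp Op x j z) i y)"

(* full composition x \<circ> [z_1,...,z_n] = (...((x \<circ>_n z_n) \<circ>_{n-1} z_{n-1})...) \<circ>_1 z_1 *)
definition fcomp :: "('a, 'b) operad_scheme \<Rightarrow> 'a \<Rightarrow> 'a list \<Rightarrow> 'a" where
  "fcomp Op x zs = foldl (\<lambda>acc (i, z). pcomp Op acc i z) x (rev (zip [1..<length zs + 1] zs))"

inductive_set generated :: "('a, 'b) operad_scheme \<Rightarrow> 'a set \<Rightarrow> 'a set"
  for Op G where
  gen_unit: "op_unit Op \<in> generated Op G"
| gen_base: "g \<in> G \<Longrightarrow> g \<in> generated Op G"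
| gen_comp: "x \<in> generated Op G \<Longrightarrow> y \<in> generated Op G \<Longrightarrow> 1 \<le> i \<Longrightarrow> i \<le> arity Op x
     \<Longrightarrow> pcomp Op x i y \<in> generated Op G"

definition generating_set :: "('a, 'b) operad_scheme \<Rightarrow> 'a set \<Rightarrow> bool" where
  "generating_set Op G \<longleftrightarrow> G \<subseteq> carrier Op \<and> generated Op G = carrier Op"

definition minimal_generating_set :: "('a, 'b) operad_scheme \<Rightarrow> 'a set \<Rightarrow> bool" where
  "minimal_generating_set Op G \<longleftrightarrow> generating_set Op G \<and> (\<forall>H. H \<subset> G \<longrightarrow> \<not> generating_set Op H)"

definition gens :: "('a, 'b) operad_scheme \<Rightarrow> 'a set" where
  "gens Op = (THE G. minimal_generating_set Op G)"

datatype 'a ptree = Leaf | Node 'a "'a ptree list"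

fun eval_tree :: "('a, 'b) operad_scheme \<Rightarrow> 'a ptree \<Rightarrow> 'a" where
  "eval_tree Op Leaf = op_unit Op"
| "eval_tree Op (Node g ts) = fcomp Op g (map (eval_tree Op) ts)"

fun internal_nodes :: "'a ptree \<Rightarrow> nat" where
  "internal_nodes Leaf = 0"
| "internal_nodes (Node g ts) = 1 + sum_list (map internal_nodes ts)"

fun wf_tree :: "('a, 'b) operad_scheme \<Rightarrow> 'a set \<Rightarrow> 'a ptree \<Rightarrow> bool" where
  "wf_tree Op G Leaf = True"
| "wf_tree Op G (Node g ts) = (g \<in> G \<and> length ts = arity Op g \<and> (\<forall>t\<in>set ts. wf_tree Op G t))"

definition treelike_expr :: "('a, 'b) operad_scheme \<Rightarrow> 'a ptree \<Rightarrow> 'a \<Rightarrow> bool" where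
  "treelike_expr Op t x \<longleftrightarrow> wf_tree Op (gens Op) t \<and> eval_tree Op t = x"

definition homogeneous :: "('a, 'b) operad_scheme \<Rightarrow> bool" where
  "homogeneous Op \<longleftrightarrow>
     {x \<in> carrier Op. arity Op x = 0} = {}
   \<and> {x \<in> carrier Op. arity Op x = 1} = {op_unit Op}
   \<and> (\<forall>x\<in>carrier Op. \<forall>t1 t2. treelike_expr Op t1 x \<and> treelike_expr Op t2 x
          \<longrightarrow> internal_nodes t1 = internal_nodes t2)"

definition finitely_generated :: "('a, 'b) operad_scheme \<Rightarrow> bool" where
  "finitely_generated Op \<longleftrightarrow> finite (gens Op)"

inductive prefix_le :: "('a, 'b) operad_scheme \<Rightarrow> 'a \<Rightarrow> 'a \<Rightarrow> bool" for Op where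
  prefix_refl: "x \<in> carrier Op \<Longrightarrow> prefix_le Op x x"
| prefix_step: "prefix_le Op x y \<Longrightarrow> a \<in> gens Op \<Longrightarrow> 1 \<le> i \<Longrightarrow> i \<le> arity Op y
     \<Longrightarrow> prefix_le Op x (pcomp Op y i a)"

definition prefix_covers :: "('a, 'b) operad_scheme \<Rightarrow> 'a \<Rightarrow> 'a \<Rightarrow> bool" where
  "prefix_covers Op x y \<longleftrightarrow> prefix_le Op x y \<and> x \<noteq> y \<and>
     \<not> (\<exists>z. prefix_le Op x z \<and> x \<noteq> z \<and> prefix_le Op z y \<and> z \<noteq> y)"

end

theory Submission imports Defs begin

definition fc :: "('a, 'b) operad_scheme \<Rightarrow> nat \<Rightarrow> 'a \<Rightarrow> 'a list \<Rightarrow> 'a" where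
  "fc Op k x zs = foldl (\<lambda>acc (i, z). pcomp Op acc i z) x (rev (zip [k..<k + length zs] zs))"

lemma fc_Nil[simp]: "fc Op k x [] = x" by (simp add: fc_def)

lemma fc_Cons[simp]: "fc Op k x (z # zs) = pcomp Op (fc Op (Suc k) x zs) k z"
  by (simp add: fc_def upt_conv_Cons del: upt_Suc)

lemma fcomp_fc: "fcomp Op x zs = fc Op 1 x zs"
  by (simp add: fcomp_def fc_def add.commute)

locale hop =
  fixes Op :: "('a, 'b) operad_scheme"
  assumes ns: "ns_operad Op" and hom: "homogeneous Op"
begin

lemma comp_closed: "x \<in> carrier Op \<Longrightarrow> y \<in> carrier Op \<Longrightarrow> 1 \<le> i \<Longrightarrow> i \<le> arity Op x \<Longrightarrow> pcomp Op x i y \<in> carrier Op"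
  using ns unfolding ns_operad_def by blast
lemma comp_arity: "x \<in> carrier Op \<Longrightarrow> y \<in> carrier Op \<Longrightarrow> 1 \<le> i \<Longrightarrow> i \<le> arity Op x \<Longrightarrow> arity Op (pcomp Op x i y) = arity Op x + arity Op y - 1"
  using ns unfolding ns_operad_def by blast
lemma unit_in: "op_unit Op \<in> carrier Op" using ns unfolding ns_operad_def by blast
lemma unit_arity: "arity Op (op_unit Op) = 1" using ns unfolding ns_operad_def by blast
lemma unit_left: "x \<in> carrier Op \<Longrightarrow> pcomp Op (op_unit Op) 1 x = x" using ns unfolding ns_operad_def by blast
lemma unit_right: "x \<in> carrier Op \<Longrightarrow> 1 \<le> i \<Longrightarrow> i \<le> arity Op x \<Longrightarrow> pcomp Op x i (op_unit Op) = x"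
  using ns unfolding ns_operad_def by blast
lemma assoc: "x \<in> carrier Op \<Longrightarrow> y \<in> carrier Op \<Longrightarrow> z \<in> carrier Op \<Longrightarrow> 1 \<le> i \<Longrightarrow> i \<le> arity Op x \<Longrightarrow> 1 \<le> j \<Longrightarrow> j \<le> arity Op y \<Longrightarrow>
        pcomp Op (pcomp Op x i y) (i + j - 1) z = pcomp Op x i (pcomp Op y j z)"
  using ns unfolding ns_operad_def by blast
lemma comm: "x \<in> carrier Op \<Longrightarrow> y \<in> carrier Op \<Longrightarrow> z \<in> carrier Op \<Longrightarrow> 1 \<le> i \<Longrightarrow> i < j \<Longrightarrow> j \<le> arity Op x \<Longrightarrow>
        pcomp Op (pcomp Op x i y) (j + arity Op y - 1) z = pcomp Op (pcomp Op x j z) i y"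
  using ns unfolding ns_operad_def by blast
lemma arity_pos: "x \<in> carrier Op \<Longrightarrow> 1 \<le> arity Op x"
  using hom unfolding homogeneous_def by (metis (mono_tags, lifting) empty_iff less_one mem_Collect_eq not_le)
lemma arity1: "x \<in> carrier Op \<Longrightarrow> arity Op x = 1 \<Longrightarrow> x = op_unit Op"
  using hom unfolding homogeneous_def by blast

lemma fc_props:
  "1 \<le> k \<Longrightarrow> k + length zs \<le> arity Op x + 1 \<Longrightarrow> x \<in> carrier Op \<Longrightarrow> set zs \<subseteq> carrier Op \<Longrightarrow>
   fc Op k x zs \<in> carrier Op \<and> arity Op x \<le> arity Op (fc Op k x zs)"
proof (induction zs arbitrary: k)
  case Nil thus ?case by simp
next
  case (Cons z zs)
  have IH: "fc Op (Suc k) x zs \<in> carrier Op \<and> arity Op x \<le> arity Op (fc Op (Suc k) x zs)"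
    using Cons by simp
  have z: "z \<in> carrier Op" using Cons by simp
  have "k \<le> arity Op (fc Op (Suc k) x zs)" using IH Cons.prems by simp
  then show ?case using IH z comp_closed[of _ z k] comp_arity[of _ z k] arity_pos[OF z] Cons.prems(1)
    by auto
qed

lemma fc_units:
  "1 \<le> k \<Longrightarrow> k + m \<le> arity Op x + 1 \<Longrightarrow> x \<in> carrier Op \<Longrightarrow> fc Op k x (replicate m (op_unit Op)) = x"
  by (induction m arbitrary: k) (auto simp: unit_right)

lemma pos_lemma:
  assumes "1 \<le> k" "k + length zs \<le> arity Op x + 1" "x \<in> carrier Op" "set zs \<subseteq> carrier Op"
    "k \<le> p" "p \<le> arity Op (fc Op k x zs)" "a \<in> carrier Op"
  shows "(\<exists>q. k + length zs \<le> q \<and> q \<le> arity Op x \<and> pcomp Op (fc Op k x zs) p a = fc Op k (pcomp Op x q a) zs)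
    \<or> (\<exists>j r. j < length zs \<and> 1 \<le> r \<and> r \<le> arity Op (zs!j) \<and>
         pcomp Op (fc Op k x zs) p a = fc Op k x (zs[j := pcomp Op (zs!j) r a]))"
  using assms
proof (induction zs arbitrary: k p)
  case Nil thus ?case by auto
next
  case (Cons z zs)
  define w where "w = fc Op (Suc k) x zs"
  have z: "z \<in> carrier Op" using Cons.prems by simp
  have zs: "set zs \<subseteq> carrier Op" using Cons.prems by simp
  have h2: "Suc k + length zs \<le> arity Op x + 1" using Cons.prems by simp
  have w: "w \<in> carrier Op" "arity Op x \<le> arity Op w"
    using fc_props[of "Suc k" zs x] h2 zs Cons.prems(3) unfolding w_def by auto
  have kw: "k \<le> arity Op w" using w h2 by simp
  have az: "1 \<le> arity Op z" using arity_pos[OF z] .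
  have ay: "arity Op (fc Op k x (z # zs)) = arity Op w + arity Op z - 1"
    using comp_arity[OF w(1) z Cons.prems(1) kw] unfolding w_def by simp
  show ?case
  proof (cases "p < k + arity Op z")
    case True
    define r where "r = p + 1 - k"
    have r: "1 \<le> r" "r \<le> arity Op z" "k + r - 1 = p" using True Cons.prems(5) unfolding r_def by auto
    have "pcomp Op (pcomp Op w k z) (k + r - 1) a = pcomp Op w k (pcomp Op z r a)"
      using assoc[OF w(1) z Cons.prems(7) Cons.prems(1) kw r(1) r(2)] .
    then have "pcomp Op (fc Op k x (z # zs)) p a = fc Op k x ((z # zs)[0 := pcomp Op ((z#zs)!0) r a])"
      using r(3) unfolding w_def by simp
    then show ?thesis using r by fastforce
  next
    case False
    define p' where "p' = p + 1 - arity Op z"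
    have p': "Suc k \<le> p'" "p' \<le> arity Op w" "p' + arity Op z - 1 = p"
      using False az Cons.prems(6) ay unfolding p'_def by auto
    have cm: "pcomp Op (pcomp Op w k z) (p' + arity Op z - 1) a = pcomp Op (pcomp Op w p' a) k z"
      using comm[OF w(1) z Cons.prems(7) Cons.prems(1) _ p'(2)] p'(1) by simp
    have IH: "(\<exists>q. Suc k + length zs \<le> q \<and> q \<le> arity Op x \<and> pcomp Op w p' a = fc Op (Suc k) (pcomp Op x q a) zs)
    \<or> (\<exists>j r. j < length zs \<and> 1 \<le> r \<and> r \<le> arity Op (zs!j) \<and>
         pcomp Op w p' a = fc Op (Suc k) x (zs[j := pcomp Op (zs!j) r a]))"
      using Cons.IH[of "Suc k" p'] h2 zs Cons.prems(3,7) p' unfolding w_def by simp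
    have eq: "pcomp Op (fc Op k x (z # zs)) p a = pcomp Op (pcomp Op w p' a) k z"
      using cm p'(3) unfolding w_def by simp
    from IH show ?thesis
    proof
      assume "\<exists>q. Suc k + length zs \<le> q \<and> q \<le> arity Op x \<and> pcomp Op w p' a = fc Op (Suc k) (pcomp Op x q a) zs"
      then obtain q where "Suc k + length zs \<le> q" "q \<le> arity Op x" "pcomp Op w p' a = fc Op (Suc k) (pcomp Op x q a) zs"
        by blast
      then show ?thesis using eq by auto
    next
      assume "\<exists>j r. j < length zs \<and> 1 \<le> r \<and> r \<le> arity Op (zs!j) \<and>
         pcomp Op w p' a = fc Op (Suc k) x (zs[j := pcomp Op (zs!j) r a])"
      then obtain j r where "j < length zs" "1 \<le> r" "r \<le> arity Op (zs!j)"
         "pcomp Op w p' a = fc Op (Suc k) x (zs[j := pcomp Op (zs!j) r a])" by blast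
      then have "Suc j < length (z#zs)" "1 \<le> r" "r \<le> arity Op ((z#zs)!Suc j)"
         "pcomp Op (fc Op k x (z # zs)) p a = fc Op k x ((z#zs)[Suc j := pcomp Op ((z#zs)!Suc j) r a])"
        using eq by auto
      then show ?thesis by blast
    qed
  qed
qed


definition indec where
  "indec = {x \<in> carrier Op. x \<noteq> op_unit Op \<and> \<not> (\<exists>y\<in>carrier Op. \<exists>z\<in>carrier Op. \<exists>i.
     y \<noteq> op_unit Op \<and> z \<noteq> op_unit Op \<and> 1 \<le> i \<and> i \<le> arity Op y \<and> x = pcomp Op y i z)}"

lemma generated_sub: "G \<subseteq> carrier Op \<Longrightarrow> generated Op G \<subseteq> carrier Op"
proof
  fix x assume G: "G \<subseteq> carrier Op" and "x \<in> generated Op G"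
  from this(2) show "x \<in> carrier Op"
    by (induction rule: generated.induct) (use G in \<open>auto simp: unit_in comp_closed\<close>)
qed

lemma arity_ge2: "x \<in> carrier Op \<Longrightarrow> x \<noteq> op_unit Op \<Longrightarrow> 2 \<le> arity Op x"
  using arity_pos arity1 by fastforce

lemma carrier_gen: "x \<in> carrier Op \<Longrightarrow> x \<in> generated Op indec"
proof (induction "arity Op x" arbitrary: x rule: less_induct)
  case less
  show ?case
  proof (cases "x = op_unit Op")
    case True thus ?thesis by (simp add: generated.gen_unit)
  next
    case False
    show ?thesis
    proof (cases "x \<in> indec")
      case True thus ?thesis by (simp add: generated.gen_base)
    next
      case nd: False
      then obtain y z i where yz: "y \<in> carrier Op" "z \<in> carrier Op" "y \<noteq> op_unit Op" "z \<noteq> op_unit Op"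
        "1 \<le> i" "i \<le> arity Op y" "x = pcomp Op y i z"
        using False less.prems unfolding indec_def by blast
      have a: "arity Op x = arity Op y + arity Op z - 1" using comp_arity yz by simp
      have "2 \<le> arity Op y" "2 \<le> arity Op z" using arity_ge2 yz by auto
      then have "arity Op y < arity Op x" "arity Op z < arity Op x" using a by auto
      then have "y \<in> generated Op indec" "z \<in> generated Op indec" using less yz by auto
      then show ?thesis using yz generated.gen_comp by metis
    qed
  qed
qed

lemma indec_gen: "generating_set Op indec"
  unfolding generating_set_def
proof
  show "indec \<subseteq> carrier Op" unfolding indec_def by blast
  then show "generated Op indec = carrier Op" using generated_sub carrier_gen by blast
qed

lemma indec_sub: assumes "generating_set Op G" shows "indec \<subseteq> G"
proof
  fix x assume x: "x \<in> indec"
  have G: "G \<subseteq> carrier Op" and gc: "generated Op G = carrier Op" using assms unfolding generating_set_def by auto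
  have "x \<in> generated Op G" using x gc unfolding indec_def by blast
  then have "x \<in> indec \<longrightarrow> x \<in> G"
  proof (induction rule: generated.induct)
    case gen_unit thus ?case unfolding indec_def by blast
  next
    case (gen_base g) thus ?case by blast
  next
    case (gen_comp u v i)
    have u: "u \<in> carrier Op" and v: "v \<in> carrier Op" using gen_comp.hyps generated_sub[OF G] by auto
    show ?case
    proof
      assume w: "pcomp Op u i v \<in> indec"
      show "pcomp Op u i v \<in> G"
      proof (cases "u = op_unit Op")
        case True
        then have "i = 1" using gen_comp.hyps unit_arity by simp
        then show ?thesis using True unit_left[OF v] gen_comp w by simp
      next
        case uF: False
        show ?thesis
        proof (cases "v = op_unit Op")
          case True
          then show ?thesis using unit_right[OF u] gen_comp w by simp
        next
          case False
          then show ?thesis using w uF u v gen_comp.hyps unfolding indec_def by blast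
        qed
      qed
    qed
  qed
  then show "x \<in> G" using x by blast
qed

lemma gens_eq: "gens Op = indec"
  unfolding gens_def
proof (rule the_equality)
  show "minimal_generating_set Op indec"
    unfolding minimal_generating_set_def using indec_gen indec_sub by blast
next
  fix G assume "minimal_generating_set Op G"
  then have g: "generating_set Op G" and m: "\<forall>H. H \<subset> G \<longrightarrow> \<not> generating_set Op H"
    unfolding minimal_generating_set_def by auto
  have "indec \<subseteq> G" using indec_sub g .
  then show "G = indec" using m indec_gen by blast
qed

lemma gens_carrier: "a \<in> gens Op \<Longrightarrow> a \<in> carrier Op"
  using gens_eq unfolding indec_def by blast
lemma gens_arity: "a \<in> gens Op \<Longrightarrow> 2 \<le> arity Op a"
  using gens_eq arity_ge2 unfolding indec_def by blast
lemma carrier_gens: "x \<in> carrier Op \<Longrightarrow> x \<in> generated Op (gens Op)"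
  using carrier_gen gens_eq by simp

lemma prefix_carrier: "prefix_le Op x y \<Longrightarrow> x \<in> carrier Op \<and> y \<in> carrier Op"
  by (induction rule: prefix_le.induct) (auto simp: comp_closed gens_carrier)

lemma prefix_trans: "prefix_le Op y z \<Longrightarrow> prefix_le Op x y \<Longrightarrow> prefix_le Op x z"
  by (induction rule: prefix_le.induct) (auto intro: prefix_le.intros)

lemma prefix_comp_gen: "z \<in> generated Op (gens Op) \<Longrightarrow> x \<in> carrier Op \<Longrightarrow> 1 \<le> i \<Longrightarrow> i \<le> arity Op x
  \<Longrightarrow> prefix_le Op x (pcomp Op x i z)"
proof (induction arbitrary: x i rule: generated.induct)
  case gen_unit thus ?case by (simp add: unit_right prefix_refl)
next
  case (gen_base g) thus ?case by (metis prefix_refl prefix_step)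
next
  case (gen_comp u v j)
  have G: "gens Op \<subseteq> carrier Op" using gens_carrier by blast
  have u: "u \<in> carrier Op" and v: "v \<in> carrier Op" using gen_comp.hyps generated_sub[OF G] by auto
  have e: "pcomp Op (pcomp Op x i u) (i + j - 1) v = pcomp Op x i (pcomp Op u j v)"
    using assoc[OF gen_comp.prems(1) u v gen_comp.prems(2,3) gen_comp.hyps(3,4)] .
  have xu: "pcomp Op x i u \<in> carrier Op" "arity Op (pcomp Op x i u) = arity Op x + arity Op u - 1"
    using comp_closed comp_arity u gen_comp.prems by auto
  have p1: "prefix_le Op x (pcomp Op x i u)" using gen_comp by blast
  have "prefix_le Op (pcomp Op x i u) (pcomp Op (pcomp Op x i u) (i + j - 1) v)"
    using gen_comp.IH(2)[OF xu(1)] xu(2) gen_comp.hyps gen_comp.prems by auto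
  then show ?case using p1 e prefix_trans by metis
qed

lemma prefix_fc: "1 \<le> k \<Longrightarrow> k + length zs \<le> arity Op x + 1 \<Longrightarrow> x \<in> carrier Op \<Longrightarrow> set zs \<subseteq> carrier Op \<Longrightarrow>
   prefix_le Op x (fc Op k x zs)"
proof (induction zs arbitrary: k)
  case Nil thus ?case by (simp add: prefix_refl)
next
  case (Cons z zs)
  have zs: "set zs \<subseteq> carrier Op" and z: "z \<in> carrier Op" using Cons.prems by auto
  have h2: "Suc k + length zs \<le> arity Op x + 1" using Cons.prems by simp
  have w: "fc Op (Suc k) x zs \<in> carrier Op" "arity Op x \<le> arity Op (fc Op (Suc k) x zs)"
    using fc_props[of "Suc k" zs x] h2 zs Cons.prems(3) by auto
  have "prefix_le Op x (fc Op (Suc k) x zs)" using Cons.IH h2 zs Cons.prems(3) by simp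
  moreover have "prefix_le Op (fc Op (Suc k) x zs) (pcomp Op (fc Op (Suc k) x zs) k z)"
    using prefix_comp_gen[OF carrier_gens[OF z] w(1)] Cons.prems(1) w(2) h2 by simp
  ultimately show ?case using prefix_trans by simp
qed

lemma eval_carrier: "wf_tree Op (gens Op) t \<Longrightarrow> eval_tree Op t \<in> carrier Op"
proof (induction t)
  case Leaf thus ?case by (simp add: unit_in)
next
  case (Node g ts)
  have "g \<in> carrier Op" using Node.prems gens_carrier by simp
  moreover have "set (map (eval_tree Op) ts) \<subseteq> carrier Op" using Node by auto
  ultimately show ?case using fc_props[of 1 "map (eval_tree Op) ts" g] Node.prems by (simp add: fcomp_fc)
qed

lemma sum_list_upd1: "j < length xs \<Longrightarrow> sum_list (xs[j := xs!j + (1::nat)]) = sum_list xs + 1"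
  by (induction xs arbitrary: j) (auto split: nat.splits)

lemma graft1: "wf_tree Op (gens Op) t \<Longrightarrow> 1 \<le> i \<Longrightarrow> i \<le> arity Op (eval_tree Op t) \<Longrightarrow> a \<in> gens Op \<Longrightarrow>
  \<exists>t'. wf_tree Op (gens Op) t' \<and> eval_tree Op t' = pcomp Op (eval_tree Op t) i a \<and> internal_nodes t' = internal_nodes t + 1"
proof (induction t arbitrary: i)
  case Leaf
  have a: "a \<in> carrier Op" using Leaf gens_carrier by simp
  have i: "i = 1" using Leaf unit_arity by simp
  let ?t = "Node a (replicate (arity Op a) Leaf)"
  have "eval_tree Op ?t = a"
    using fc_units[of 1 "arity Op a" a] a by (simp add: fcomp_fc)
  moreover have "internal_nodes ?t = 1" by (simp add: sum_list_replicate)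
  ultimately show ?case using Leaf.prems i unit_left[OF a] by (intro exI[of _ ?t]) auto
next
  case (Node g ts)
  let ?ys = "map (eval_tree Op) ts"
  have g: "g \<in> carrier Op" "length ts = arity Op g" using Node.prems gens_carrier by auto
  have ys: "set ?ys \<subseteq> carrier Op" using Node.prems eval_carrier by auto
  have a: "a \<in> carrier Op" using Node gens_carrier by simp
  have ev: "eval_tree Op (Node g ts) = fc Op 1 g ?ys" by (simp add: fcomp_fc)
  have "(\<exists>q. 1 + length ?ys \<le> q \<and> q \<le> arity Op g \<and> pcomp Op (fc Op 1 g ?ys) i a = fc Op 1 (pcomp Op g q a) ?ys)
    \<or> (\<exists>j r. j < length ?ys \<and> 1 \<le> r \<and> r \<le> arity Op (?ys!j) \<and>
         pcomp Op (fc Op 1 g ?ys) i a = fc Op 1 g (?ys[j := pcomp Op (?ys!j) r a]))"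
    using pos_lemma[of 1 ?ys g i a] g ys a Node.prems ev by simp
  then obtain j r where jr: "j < length ts" "1 \<le> r" "r \<le> arity Op (eval_tree Op (ts!j))"
    "pcomp Op (fc Op 1 g ?ys) i a = fc Op 1 g (?ys[j := pcomp Op (eval_tree Op (ts!j)) r a])"
    using g by auto
  have tj: "ts!j \<in> set ts" using jr by simp
  obtain t'' where t'': "wf_tree Op (gens Op) t''" "eval_tree Op t'' = pcomp Op (eval_tree Op (ts!j)) r a"
    "internal_nodes t'' = internal_nodes (ts!j) + 1"
    using Node.IH[OF tj, of r] Node.prems tj jr by auto
  let ?t = "Node g (ts[j := t''])"
  have "wf_tree Op (gens Op) ?t" using Node.prems t'' jr
    by (auto dest: set_update_subset_insert[THEN subsetD])
  moreover have "eval_tree Op ?t = pcomp Op (eval_tree Op (Node g ts)) i a"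
    using jr t'' ev by (simp add: fcomp_fc map_update)
  moreover have "internal_nodes ?t = internal_nodes (Node g ts) + 1"
  proof -
    have "map internal_nodes (ts[j := t'']) = (map internal_nodes ts)[j := (map internal_nodes ts)!j + 1]"
      using t'' jr by (simp add: map_update)
    then show ?thesis using sum_list_upd1[of j "map internal_nodes ts"] jr by simp
  qed
  ultimately show ?case by blast
qed

lemma prefix_nodes: "prefix_le Op x z \<Longrightarrow> treelike_expr Op t x \<Longrightarrow>
  \<exists>t'. treelike_expr Op t' z \<and> internal_nodes t \<le> internal_nodes t' \<and> (x \<noteq> z \<longrightarrow> internal_nodes t < internal_nodes t')"
proof (induction rule: prefix_le.induct)
  case (prefix_refl x) thus ?case by blast
next
  case (prefix_step x y a i)
  obtain t' where t': "treelike_expr Op t' y" "internal_nodes t \<le> internal_nodes t'" using prefix_step by blast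
  obtain t'' where "wf_tree Op (gens Op) t''" "eval_tree Op t'' = pcomp Op y i a" "internal_nodes t'' = internal_nodes t' + 1"
    using graft1[of t' i a] t' prefix_step unfolding treelike_expr_def by auto
  then show ?case using t' unfolding treelike_expr_def by (intro exI[of _ t'']) auto
qed

lemma has_tree: "x \<in> carrier Op \<Longrightarrow> \<exists>t. treelike_expr Op t x"
proof -
  assume x: "x \<in> carrier Op"
  have "prefix_le Op (op_unit Op) (fc Op 1 (op_unit Op) [x])"
    using prefix_fc[of 1 "[x]" "op_unit Op"] x unit_in unit_arity by simp
  then have "prefix_le Op (op_unit Op) x" using unit_left[OF x] by simp
  moreover have "treelike_expr Op Leaf (op_unit Op)" unfolding treelike_expr_def by simp
  ultimately show ?thesis using prefix_nodes by blast
qed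

lemma homog: "x \<in> carrier Op \<Longrightarrow> treelike_expr Op t1 x \<Longrightarrow> treelike_expr Op t2 x \<Longrightarrow> internal_nodes t1 = internal_nodes t2"
  using hom unfolding homogeneous_def by blast

lemma part1: "x \<in> carrier Op \<Longrightarrow> y \<in> carrier Op \<Longrightarrow>
  prefix_le Op x y \<longleftrightarrow> (\<exists>zs. length zs = arity Op x \<and> set zs \<subseteq> carrier Op \<and> y = fcomp Op x zs)"
proof
  assume "prefix_le Op x y"
  then show "\<exists>zs. length zs = arity Op x \<and> set zs \<subseteq> carrier Op \<and> y = fcomp Op x zs"
  proof (induction rule: prefix_le.induct)
    case (prefix_refl x)
    then show ?case using fc_units[of 1 "arity Op x" x] unit_in
      by (intro exI[of _ "replicate (arity Op x) (op_unit Op)"]) (auto simp: fcomp_fc)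
  next
    case (prefix_step x y a i)
    then obtain zs where zs: "length zs = arity Op x" "set zs \<subseteq> carrier Op" "y = fc Op 1 x zs"
      by (auto simp: fcomp_fc)
    have x: "x \<in> carrier Op" using prefix_step prefix_carrier by blast
    have "(\<exists>q. 1 + length zs \<le> q \<and> q \<le> arity Op x \<and> pcomp Op (fc Op 1 x zs) i a = fc Op 1 (pcomp Op x q a) zs)
    \<or> (\<exists>j r. j < length zs \<and> 1 \<le> r \<and> r \<le> arity Op (zs!j) \<and>
         pcomp Op (fc Op 1 x zs) i a = fc Op 1 x (zs[j := pcomp Op (zs!j) r a]))"
      using pos_lemma[of 1 zs x i a] zs x prefix_step gens_carrier by simp
    then obtain j r where jr: "j < length zs" "1 \<le> r" "r \<le> arity Op (zs!j)"
         "pcomp Op (fc Op 1 x zs) i a = fc Op 1 x (zs[j := pcomp Op (zs!j) r a])" using zs by auto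
    have "zs!j \<in> carrier Op" using jr zs by auto
    then have "pcomp Op (zs!j) r a \<in> carrier Op" using comp_closed jr prefix_step gens_carrier by blast
    then have "set (zs[j := pcomp Op (zs!j) r a]) \<subseteq> carrier Op" using zs
      by (meson dual_order.trans insert_subset set_update_subset_insert)
    then show ?case using jr zs by (intro exI[of _ "zs[j := pcomp Op (zs!j) r a]"]) (auto simp: fcomp_fc)
  qed
next
  assume "x \<in> carrier Op" "\<exists>zs. length zs = arity Op x \<and> set zs \<subseteq> carrier Op \<and> y = fcomp Op x zs"
  then show "prefix_le Op x y" using prefix_fc[of 1 _ x] by (auto simp: fcomp_fc)
qed

lemma part2: "x \<in> carrier Op \<Longrightarrow> y \<in> carrier Op \<Longrightarrow>
  prefix_covers Op x y \<longleftrightarrow> (\<exists>a\<in>gens Op. \<exists>i. 1 \<le> i \<and> i \<le> arity Op x \<and> y = pcomp Op x i a)"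
proof
  assume c: "prefix_covers Op x y"
  then have p: "prefix_le Op x y" and ne: "x \<noteq> y" and
    nz: "\<not> (\<exists>z. prefix_le Op x z \<and> x \<noteq> z \<and> prefix_le Op z y \<and> z \<noteq> y)"
    unfolding prefix_covers_def by auto
  from p show "\<exists>a\<in>gens Op. \<exists>i. 1 \<le> i \<and> i \<le> arity Op x \<and> y = pcomp Op x i a"
  proof cases
    case prefix_refl thus ?thesis using ne by simp
  next
    case (prefix_step y0 a i)
    have y0: "y0 \<in> carrier Op" using prefix_step prefix_carrier by blast
    have "y0 \<noteq> y"
    proof
      assume "y0 = y"
      have "arity Op y = arity Op y0 + arity Op a - 1"
        using prefix_step comp_arity y0 gens_carrier by simp
      then show False using gens_arity[OF prefix_step(3)] \<open>y0 = y\<close> by simp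
    qed
    moreover have "prefix_le Op y0 y" using prefix_step y0 by (metis prefix_le.intros)
    ultimately have "x = y0" using nz prefix_step by blast
    then show ?thesis using prefix_step by blast
  qed
next
  assume x: "x \<in> carrier Op" and "\<exists>a\<in>gens Op. \<exists>i. 1 \<le> i \<and> i \<le> arity Op x \<and> y = pcomp Op x i a"
  then obtain a i where ai: "a \<in> gens Op" "1 \<le> i" "i \<le> arity Op x" "y = pcomp Op x i a" by blast
  have p: "prefix_le Op x y" using ai x by (metis prefix_le.intros)
  have ne: "x \<noteq> y"
  proof
    assume "x = y"
    have "arity Op (pcomp Op x i a) = arity Op x + arity Op a - 1"
      using ai comp_arity x gens_carrier by blast
    moreover have "arity Op y = arity Op x" using \<open>x = y\<close> by (rule arg_cong[OF sym])
    ultimately show False using gens_arity[OF ai(1)] ai(4) by simp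
  qed
  obtain t where t: "treelike_expr Op t x" using has_tree x by blast
  obtain ty where ty: "treelike_expr Op ty y" "internal_nodes ty = internal_nodes t + 1"
    using graft1[of t i a] t ai unfolding treelike_expr_def by auto
  have "\<not> (\<exists>z. prefix_le Op x z \<and> x \<noteq> z \<and> prefix_le Op z y \<and> z \<noteq> y)"
  proof
    assume "\<exists>z. prefix_le Op x z \<and> x \<noteq> z \<and> prefix_le Op z y \<and> z \<noteq> y"
    then obtain z where z: "prefix_le Op x z" "x \<noteq> z" "prefix_le Op z y" "z \<noteq> y" by blast
    obtain tz where tz: "treelike_expr Op tz z" "internal_nodes t < internal_nodes tz"
      using prefix_nodes[OF z(1) t] z by blast
    obtain ty' where ty': "treelike_expr Op ty' y" "internal_nodes tz < internal_nodes ty'"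
      using prefix_nodes[OF z(3) tz(1)] z by blast
    have "internal_nodes ty = internal_nodes ty'" using homog ty ty' p prefix_carrier by blast
    then show False using ty tz ty' by simp
  qed
  then show "prefix_covers Op x y" using p ne unfolding prefix_covers_def by blast
qed

end

theorem proposition4p5:
  fixes Op :: "('a, 'b) operad_scheme"
  assumes "ns_operad Op" and "homogeneous Op" and "finitely_generated Op"
  shows "(\<forall>x\<in>carrier Op. \<forall>y\<in>carrier Op.
            prefix_le Op x y \<longleftrightarrow>
            (\<exists>zs. length zs = arity Op x \<and> set zs \<subseteq> carrier Op \<and> y = fcomp Op x zs))
       \<and> (\<forall>x\<in>carrier Op. \<forall>y\<in>carrier Op.
            prefix_covers Op x y \<longleftrightarrow>
            (\<exists>a\<in>gens Op. \<exists>i. 1 \<le> i \<and> i \<le> arity Op x \<and> y = pcomp Op x i a))"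
proof -
  interpret hop Op using assms by (unfold_locales)
  show ?thesis using part1 part2 by blast
qed

end
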